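(* Let $I,J$ be disjoint subsets of $\{1,\dots,n\}$ and $I',J'$ disjoint subsets of $\{1,\dots,n\}$, let $a_k\in\mathbb{R}$ for $k\in I\cup J$ and $b_k\in\mathbb{R}$ for $k\in I'\cup J'$, and let $\mathscr H=\{x\in\mathbb{R}_{\max}^n:\bigoplus_{i\in I}a_ix_i\le\bigoplus_{j\in J}a_jx_j\}$, $\mathscr H'=\{x\in\mathbb{R}_{\max}^n:\bigoplus_{i\in I'}b_ix_i\le\bigoplus_{j\in J'}b_jx_j\}$. If $I\neq\emptyset$, then $\mathscr H'\subset\mathscr H$ if and only if $I\subset I'$, $J'\subset J$, and $b_j-b_i\le a_j-a_i$ for all $i\in I$ and $j\in J'$.
   Context: $\mathbb{R}_{\max}=\mathbb{R}\cup\{-\infty\}$ with $a\oplus b=\max(a,b)$ and $ab=a+b$; an empty max-plus sum equals $-\infty$. Thus $\bigoplus_{i\in I}a_ix_i=\max_{i\in I}(a_i+x_i)$. *)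

theory Defs
  imports "HOL-Library.Extended_Real"
begin

text \<open>R_max = real extended by -infinity, modelled inside ereal (value \<infinity> excluded).
  A point of R_max^n is a function on {1..n} with values in R_max, extended by -\<infinity>
  outside {1..n}.\<close>

definition rmax_vec :: "nat \<Rightarrow> (nat \<Rightarrow> ereal) set" where
  "rmax_vec n = {x. \<forall>k. (k \<in> {1..n} \<longrightarrow> x k \<noteq> \<infinity>) \<and> (k \<notin> {1..n} \<longrightarrow> x k = -\<infinity>)}"

text \<open>Max-plus linear form: max over i in I of a_i + x_i; the empty sum is -\<infinity>
  (Sup of the empty set in ereal).\<close>

definition mp_form :: "(nat \<Rightarrow> real) \<Rightarrow> nat set \<Rightarrow> (nat \<Rightarrow> ereal) \<Rightarrow> ereal" where
  "mp_form a I x = (SUP i\<in>I. ereal (a i) + x i)"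

definition tropical_halfspace ::
  "nat \<Rightarrow> nat set \<Rightarrow> nat set \<Rightarrow> (nat \<Rightarrow> real) \<Rightarrow> (nat \<Rightarrow> ereal) set" where
  "tropical_halfspace n I J a = {x \<in> rmax_vec n. mp_form a I x \<le> mp_form a J x}"

end

theory Submission
  imports Defs
begin

lemma mp_attain:
  assumes "finite K" "K \<noteq> {}"
  shows "\<exists>k\<in>K. mp_form b K x = ereal (b k) + x k"
proof -
  have "mp_form b K x = Max ((\<lambda>k. ereal (b k) + x k) ` K)"
    unfolding mp_form_def using assms by (simp add: Max_Sup)
  moreover have "Max ((\<lambda>k. ereal (b k) + x k) ` K) \<in> (\<lambda>k. ereal (b k) + x k) ` K"
    using assms by (intro Max_in) auto
  ultimately show ?thesis by auto
qed

lemma mp_upper: "k \<in> K \<Longrightarrow> ereal (b k) + x k \<le> mp_form b K x"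
  unfolding mp_form_def by (rule SUP_upper) auto

lemma mp_le: "(\<And>k. k \<in> K \<Longrightarrow> ereal (b k) + x k \<le> y) \<Longrightarrow> mp_form b K x \<le> y"
  unfolding mp_form_def by (rule SUP_least) auto

theorem lemma3p2:
  fixes n :: nat and I J I' J' :: "nat set" and a b :: "nat \<Rightarrow> real"
  assumes "I \<subseteq> {1..n}" "J \<subseteq> {1..n}" "I \<inter> J = {}"
    and "I' \<subseteq> {1..n}" "J' \<subseteq> {1..n}" "I' \<inter> J' = {}"
    and "I \<noteq> {}"
  shows "tropical_halfspace n I' J' b \<subseteq> tropical_halfspace n I J a \<longleftrightarrow>
    (I \<subseteq> I' \<and> J' \<subseteq> J \<and> (\<forall>i\<in>I. \<forall>j\<in>J'. b j - b i \<le> a j - a i))"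
proof
  assume H: "tropical_halfspace n I' J' b \<subseteq> tropical_halfspace n I J a"
  define ex :: "nat \<Rightarrow> nat \<Rightarrow> ereal \<Rightarrow> nat \<Rightarrow> ereal" where
    "ex i j t = (\<lambda>k. if k = i then 0 else if k = j then t else -\<infinity>)" for i j t
  have vec: "ex i j t \<in> rmax_vec n" if "i \<in> {1..n}" "j \<in> {1..n}" "t \<noteq> \<infinity>" for i j t
    using that unfolding rmax_vec_def ex_def by auto
  have key: "ereal (a i) \<le> ereal (a j) + t"
    if i: "i \<in> I" and j: "j \<in> {1..n}" "j \<noteq> i" and t: "t \<noteq> \<infinity>"
      and h': "mp_form b I' (ex i j t) \<le> mp_form b J' (ex i j t)" for i j t
  proof -
    have "ex i j t \<in> tropical_halfspace n I' J' b"
      unfolding tropical_halfspace_def using vec[of i j t] assms(1) i j t h' by auto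
    with H have hh: "mp_form a I (ex i j t) \<le> mp_form a J (ex i j t)"
      unfolding tropical_halfspace_def by auto
    have "ereal (a i) + ex i j t i \<le> mp_form a I (ex i j t)" using i by (rule mp_upper)
    also note hh
    also have "mp_form a J (ex i j t) \<le> ereal (a j) + t"
    proof (rule mp_le)
      fix k assume k: "k \<in> J"
      then have "k \<noteq> i" using assms(3) i by auto
      then show "ereal (a k) + ex i j t k \<le> ereal (a j) + t"
        unfolding ex_def by auto
    qed
    finally show ?thesis unfolding ex_def by simp
  qed
  have sub1: "I \<subseteq> I'"
  proof
    fix i assume i: "i \<in> I"
    show "i \<in> I'"
    proof (rule ccontr)
      assume ni: "i \<notin> I'"
      have "mp_form b I' (ex i i (-\<infinity>)) \<le> -\<infinity>"
        by (rule mp_le) (use ni in \<open>auto simp: ex_def\<close>)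
      then have "mp_form b I' (ex i i (-\<infinity>)) \<le> mp_form b J' (ex i i (-\<infinity>))" by simp
      then have "mp_form a I (ex i i (-\<infinity>)) \<le> mp_form a J (ex i i (-\<infinity>))"
      proof -
        have "ex i i (-\<infinity>) \<in> tropical_halfspace n I' J' b"
          unfolding tropical_halfspace_def using vec[of i i "-\<infinity>"] i assms(1) \<open>mp_form b I' (ex i i (-\<infinity>)) \<le> mp_form b J' (ex i i (-\<infinity>))\<close> by auto
        with H show ?thesis unfolding tropical_halfspace_def by auto
      qed
      moreover have "ereal (a i) + ex i i (-\<infinity>) i \<le> mp_form a I (ex i i (-\<infinity>))"
        using i by (rule mp_upper)
      moreover have "mp_form a J (ex i i (-\<infinity>)) \<le> -\<infinity>"
        by (rule mp_le) (use i assms(3) in \<open>auto simp: ex_def\<close>)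
      ultimately show False by (simp add: ex_def)
    qed
  qed
  obtain i0 where i0: "i0 \<in> I" using assms(7) by auto
  have gen: "ereal (a i) \<le> ereal (a j) + ereal (b i - b j)" if i: "i \<in> I" and j: "j \<in> J'" for i j
  proof -
    have iI': "i \<in> I'" using sub1 i by auto
    have ji: "j \<noteq> i" using iI' j assms(6) by auto
    have jn: "j \<in> {1..n}" using j assms(5) by auto
    show ?thesis
    proof (rule key[OF i jn ji])
      show "ereal (b i - b j) \<noteq> \<infinity>" by simp
      have "mp_form b I' (ex i j (ereal (b i - b j))) \<le> ereal (b i)"
      proof (rule mp_le)
        fix k assume k: "k \<in> I'"
        then have "k \<noteq> j" using j assms(6) by auto
        then show "ereal (b k) + ex i j (ereal (b i - b j)) k \<le> ereal (b i)"
          unfolding ex_def by auto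
      qed
      also have "ereal (b i) = ereal (b j) + ex i j (ereal (b i - b j)) j"
        using ji unfolding ex_def by simp
      also have "\<dots> \<le> mp_form b J' (ex i j (ereal (b i - b j)))" using j by (rule mp_upper)
      finally show "mp_form b I' (ex i j (ereal (b i - b j))) \<le> mp_form b J' (ex i j (ereal (b i - b j)))" .
    qed
  qed
  have sub2: "J' \<subseteq> J"
  proof
    fix j assume j: "j \<in> J'"
    show "j \<in> J"
    proof (rule ccontr)
      assume nj: "j \<notin> J"
      have i0I': "i0 \<in> I'" using sub1 i0 by auto
      have ji: "j \<noteq> i0" using i0I' j assms(6) by auto
      let ?x = "ex i0 j (ereal (b i0 - b j))"
      have "ex i0 j (ereal (b i0 - b j)) \<in> tropical_halfspace n I' J' b"
      proof -
        have "mp_form b I' ?x \<le> ereal (b i0)"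
        proof (rule mp_le)
          fix k assume k: "k \<in> I'"
          then have "k \<noteq> j" using j assms(6) by auto
          then show "ereal (b k) + ?x k \<le> ereal (b i0)" unfolding ex_def by auto
        qed
        also have "ereal (b i0) = ereal (b j) + ?x j" using ji unfolding ex_def by simp
        also have "\<dots> \<le> mp_form b J' ?x" using j by (rule mp_upper)
        finally have "mp_form b I' ?x \<le> mp_form b J' ?x" .
        moreover have "?x \<in> rmax_vec n"
          using assms(1) assms(5) i0 j by (intro vec) auto
        ultimately show ?thesis unfolding tropical_halfspace_def by blast
      qed
      with H have hh: "mp_form a I ?x \<le> mp_form a J ?x"
        unfolding tropical_halfspace_def by auto
      have "ereal (a i0) + ?x i0 \<le> mp_form a I ?x" using i0 by (rule mp_upper)
      moreover have "mp_form a J ?x \<le> -\<infinity>"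
      proof (rule mp_le)
        fix k assume k: "k \<in> J"
        then have "k \<noteq> i0" "k \<noteq> j" using i0 assms(3) nj by auto
        then show "ereal (a k) + ?x k \<le> -\<infinity>" unfolding ex_def by auto
      qed
      ultimately show False using hh by (simp add: ex_def)
    qed
  qed
  have "\<forall>i\<in>I. \<forall>j\<in>J'. b j - b i \<le> a j - a i"
    using gen by force
  with sub1 sub2 show "I \<subseteq> I' \<and> J' \<subseteq> J \<and> (\<forall>i\<in>I. \<forall>j\<in>J'. b j - b i \<le> a j - a i)" by blast
next
  assume R: "I \<subseteq> I' \<and> J' \<subseteq> J \<and> (\<forall>i\<in>I. \<forall>j\<in>J'. b j - b i \<le> a j - a i)"
  show "tropical_halfspace n I' J' b \<subseteq> tropical_halfspace n I J a"
  proof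
    fix x assume x: "x \<in> tropical_halfspace n I' J' b"
    then have xv: "x \<in> rmax_vec n" and hx: "mp_form b I' x \<le> mp_form b J' x"
      unfolding tropical_halfspace_def by auto
    have "mp_form a I x \<le> mp_form a J x"
    proof (rule mp_le)
      fix i assume i: "i \<in> I"
      show "ereal (a i) + x i \<le> mp_form a J x"
      proof (cases "x i = -\<infinity>")
        case True then show ?thesis by simp
      next
        case False
        have "x i \<noteq> \<infinity>" using xv i assms(1) unfolding rmax_vec_def by auto
        with False obtain r where r: "x i = ereal r" by (cases "x i") auto
        have "ereal (b i) + x i \<le> mp_form b I' x" using R i by (intro mp_upper) auto
        also note hx
        finally have le: "ereal (b i + r) \<le> mp_form b J' x" using r by simp
        have "J' \<noteq> {}"
        proof
          assume "J' = {}"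
          then have "mp_form b J' x = -\<infinity>" unfolding mp_form_def by (simp add: bot_ereal_def)
          with le show False by simp
        qed
        moreover have "finite J'" using assms(5) finite_subset by blast
        ultimately obtain j where j: "j \<in> J'" and eq: "mp_form b J' x = ereal (b j) + x j"
          using mp_attain by blast
        have "x j \<noteq> \<infinity>" using xv j assms(5) unfolding rmax_vec_def by auto
        moreover have "x j \<noteq> -\<infinity>" using le eq by auto
        ultimately obtain s where s: "x j = ereal s" by (cases "x j") auto
        have "b i + r \<le> b j + s" using le eq s by simp
        moreover have "b j - b i \<le> a j - a i" using R i j by auto
        ultimately have "ereal (a i) + x i \<le> ereal (a j) + x j" using r s by simp
        also have "\<dots> \<le> mp_form a J x" using R j by (intro mp_upper) auto
        finally show ?thesis .
      qed
    qed
    with xv show "x \<in> tropical_halfspace n I J a" unfolding tropical_halfspace_def by auto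
  qed
qed

end
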